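(* Let $0\le s<n$, $A\in M_{s+1,n-s}$, and $\mathcal L=\{(x,\tilde xA)\mid x\in\mathbb R^s\}\subset\mathbb R^n$ with $\tilde x=(1,x)$. Then for every $v<\omega(A)$ there exists an infinite subset $\mathcal A\subset\mathbb Z\times\mathbb Z^n$ such that for every $y\in\mathcal L$, the inequality $|yq+p|<\|q\|^{-v}$ holds for all but finitely many $(p,q)\in\mathcal A$.
   Context: $yq=\sum_{i=1}^ny_iq_i$ for the row vector $y$ and $q\in\mathbb Z^n$. $\omega(A)$ is the supremum of $u>0$ for which there are infinitely many $q\in\mathbb Z^{n-s}$ with $\|Aq+p\|<\|q\|^{-u}$ for some $p\in\mathbb Z^{s+1}$. *)

theory Defs
  imports Complex_Main "HOL-Library.Extended_Real"
begin

text \<open>Vectors in R^k / Z^k are modelled as functions on nat, with coordinates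
  0..k-1 (indices outside are irrelevant / forced to be 0 where needed).
  Matrices in M_{a,b} are functions nat => nat => real, rows < a, columns < b.\<close>

definition supnorm :: "nat \<Rightarrow> (nat \<Rightarrow> real) \<Rightarrow> real" where
  "supnorm k x = (MAX i\<in>{..<k}. \<bar>x i\<bar>)"

definition supp_in :: "nat \<Rightarrow> (nat \<Rightarrow> 'a::zero) \<Rightarrow> bool" where
  "supp_in k x \<longleftrightarrow> (\<forall>i\<ge>k. x i = 0)"

definition matvec :: "nat \<Rightarrow> nat \<Rightarrow> (nat \<Rightarrow> nat \<Rightarrow> real) \<Rightarrow> (nat \<Rightarrow> int) \<Rightarrow> nat \<Rightarrow> real" where
  "matvec s n A q = (\<lambda>i. \<Sum>j<n - s. A i j * real_of_int (q j))"

definition omega :: "nat \<Rightarrow> nat \<Rightarrow> (nat \<Rightarrow> nat \<Rightarrow> real) \<Rightarrow> ereal" where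
  "omega s n A = Sup {ereal u | u. u > 0 \<and>
     infinite {q :: nat \<Rightarrow> int. supp_in (n - s) q \<and>
       (\<exists>p :: nat \<Rightarrow> int. supp_in (s + 1) p \<and>
          supnorm (s + 1) (\<lambda>i. matvec s n A q i + real_of_int (p i))
            < supnorm (n - s) (\<lambda>j. real_of_int (q j)) powr (- u))}}"

definition Lspace :: "nat \<Rightarrow> nat \<Rightarrow> (nat \<Rightarrow> nat \<Rightarrow> real) \<Rightarrow> (nat \<Rightarrow> real) set" where
  "Lspace s n A = {y. \<exists>x :: nat \<Rightarrow> real.
      (\<forall>i<s. y i = x i) \<and>
      (\<forall>j<n - s. y (s + j) = A 0 j + (\<Sum>i<s. x i * A (i + 1) j)) \<and>
      (\<forall>i\<ge>n. y i = 0)}"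

definition dotp :: "nat \<Rightarrow> (nat \<Rightarrow> real) \<Rightarrow> (nat \<Rightarrow> int) \<Rightarrow> real" where
  "dotp n y q = (\<Sum>i<n. y i * real_of_int (q i))"

end

theory Submission
  imports Defs "HOL-Library.FuncSet"
begin

lemma fin_bounded:
  "finite {q::nat\<Rightarrow>int. supp_in m q \<and> (\<forall>i<m. \<bar>real_of_int (q i)\<bar> \<le> R)}"
proof -
  let ?B = "{q::nat\<Rightarrow>int. supp_in m q \<and> (\<forall>i<m. \<bar>real_of_int (q i)\<bar> \<le> R)}"
  have inj: "inj_on (\<lambda>q. restrict q {..<m}) ?B"
  proof (rule inj_onI)
    fix a b assume a: "a \<in> ?B" and b: "b \<in> ?B" and e: "restrict a {..<m} = restrict b {..<m}"
    show "a = b"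
    proof
      fix i show "a i = b i"
      proof (cases "i < m")
        case True then show ?thesis using fun_cong[OF e, of i] by simp
      next
        case False then show ?thesis using a b by (auto simp: supp_in_def)
      qed
    qed
  qed
  have sub: "(\<lambda>q. restrict q {..<m}) ` ?B \<subseteq> (\<Pi>\<^sub>E i \<in> {..<m}. {-\<lceil>R\<rceil>..\<lceil>R\<rceil>})"
  proof
    fix f assume "f \<in> (\<lambda>q. restrict q {..<m}) ` ?B"
    then obtain q where q: "q \<in> ?B" and f: "f = restrict q {..<m}" by blast
    have "\<And>i. i < m \<Longrightarrow> q i \<in> {-\<lceil>R\<rceil>..\<lceil>R\<rceil>}"
    proof -
      fix i assume "i < m"
      then have "\<bar>real_of_int (q i)\<bar> \<le> R" using q by auto
      then have "real_of_int (q i) \<le> R" "- R \<le> real_of_int (q i)" by linarith+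
      then have "q i \<le> \<lceil>R\<rceil>" "-\<lceil>R\<rceil> \<le> q i" by linarith+
      then show "q i \<in> {-\<lceil>R\<rceil>..\<lceil>R\<rceil>}" by simp
    qed
    then show "f \<in> (\<Pi>\<^sub>E i \<in> {..<m}. {-\<lceil>R\<rceil>..\<lceil>R\<rceil>})" unfolding f by (simp add: PiE_iff)
  qed
  have "finite (\<Pi>\<^sub>E i \<in> {..<m}. {-\<lceil>R\<rceil>..\<lceil>R\<rceil>})" by (intro finite_PiE) auto
  then have "finite ((\<lambda>q. restrict q {..<m}) ` ?B)" by (rule finite_subset[OF sub])
  then show ?thesis by (rule finite_imageD[OF _ inj])
qed

lemma supnorm_ge: "i < k \<Longrightarrow> \<bar>x i\<bar> \<le> supnorm k x"
  unfolding supnorm_def by (rule Max_ge) auto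

lemma supnorm_le: "0 < k \<Longrightarrow> (\<And>i. i < k \<Longrightarrow> \<bar>x i\<bar> \<le> R) \<Longrightarrow> supnorm k x \<le> R"
  unfolding supnorm_def by (subst Max_le_iff) auto

lemma supnorm_att: "0 < k \<Longrightarrow> \<exists>i<k. supnorm k x = \<bar>x i\<bar>"
proof -
  assume "0 < k"
  then have "Max ((\<lambda>i. \<bar>x i\<bar>) ` {..<k}) \<in> (\<lambda>i. \<bar>x i\<bar>) ` {..<k}" by (intro Max_in) auto
  then obtain i where "i \<in> {..<k}" "Max ((\<lambda>i. \<bar>x i\<bar>) ` {..<k}) = \<bar>x i\<bar>" by (rule imageE) simp
  then show ?thesis unfolding supnorm_def by blast
qed

lemma sum_split: fixes s n :: nat shows "s \<le> n \<Longrightarrow> (\<Sum>i<n. f i) = (\<Sum>i<s. f i) + (\<Sum>j<n-s. f (s+j))"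
proof -
  assume "s \<le> n"
  then obtain m where n: "n = s + m" using le_Suc_ex[OF \<open>s \<le> n\<close>] by blast
  have "(\<Sum>i<s+m. f i) = (\<Sum>i<s. f i) + (\<Sum>j<m. f (s+j))"
  proof (induction m)
    case 0 then show ?case by simp
  next
    case (Suc m) then show ?case by (simp add: add.assoc)
  qed
  then show ?thesis unfolding n by simp
qed

lemma threshold:
  fixes C K u v :: real
  assumes "v < u" "0 < u" "C > 0" "K > 0"
  shows "\<exists>R\<ge>1. \<forall>N\<ge>R. C * N powr (-u) \<le> (K*N) powr (-v) \<and> C * N powr (-u) \<le> N powr (-v)"
proof -
  define d where "d = u - v"
  have d: "d > 0" using assms d_def by simp
  define a where "a = max C (C * K powr v)"
  have a: "a > 0" using assms a_def by simp
  define R where "R = max 1 (a powr (1/d))"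
  have key: "a \<le> N powr d" if "N \<ge> R" for N
  proof -
    have "a = (a powr (1/d)) powr d" using a d by (simp add: powr_powr)
    also have "\<dots> \<le> N powr d" using that d R_def by (intro powr_mono2) auto
    finally show ?thesis .
  qed
  have "\<forall>N\<ge>R. C * N powr (-u) \<le> (K*N) powr (-v) \<and> C * N powr (-u) \<le> N powr (-v)"
  proof (intro allI impI conjI)
    fix N assume N: "N \<ge> R"
    then have N0: "N > 0" using R_def by auto
    have e: "N powr (-v) = N powr d * N powr (-u)" using d_def by (simp add: powr_add[symmetric])
    have "C * N powr (-u) \<le> a * N powr (-u)" using a_def by (intro mult_right_mono) auto
    also have "\<dots> \<le> N powr d * N powr (-u)" using key[OF N] by (intro mult_right_mono) auto
    finally show "C * N powr (-u) \<le> N powr (-v)" using e by simp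
    have e2: "(K*N) powr (-v) = K powr (-v) * N powr (-v)" using N0 assms by (simp add: powr_mult)
    have "C * K powr v \<le> N powr d" using key[OF N] a_def by simp
    then have "C * K powr v * N powr (-u) \<le> N powr d * N powr (-u)" by (intro mult_right_mono) auto
    then have "K powr (-v) * (C * K powr v * N powr (-u)) \<le> K powr (-v) * N powr (-v)"
      using e by (intro mult_left_mono) auto
    moreover have "K powr (-v) * (C * K powr v * N powr (-u)) = C * N powr (-u)"
      using assms by (simp add: powr_minus field_simps)
    ultimately show "C * N powr (-u) \<le> (K*N) powr (-v)" using e2 by simp
  qed
  then show ?thesis using R_def by (intro exI[of _ R]) auto
qed


lemma identity:
  fixes x :: "nat \<Rightarrow> real" and q p :: "nat \<Rightarrow> int"
  assumes sn: "s < n"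
    and y1: "\<forall>i<s. y i = x i"
    and y2: "\<forall>j<n - s. y (s + j) = A 0 j + (\<Sum>i<s. x i * A (i + 1) j)"
  defines "Q \<equiv> (\<lambda>i. if i < s then p (Suc i) else if i < n then q (i - s) else 0)"
  defines "e \<equiv> (\<lambda>i. matvec s n A q i + real_of_int (p i))"
  shows "dotp n y Q + real_of_int (p 0) = e 0 + (\<Sum>i<s. x i * e (Suc i))"
proof -
  have "dotp n y Q = (\<Sum>i<s. y i * Q i) + (\<Sum>j<n-s. y (s+j) * Q (s+j))"
    unfolding dotp_def using sn by (intro sum_split) simp
  also have "(\<Sum>i<s. y i * Q i) = (\<Sum>i<s. x i * p (Suc i))"
    using y1 by (intro sum.cong) (auto simp: Q_def)
  also have "(\<Sum>j<n-s. y (s+j) * Q (s+j)) = (\<Sum>j<n-s. (A 0 j + (\<Sum>i<s. x i * A (Suc i) j)) * q j)"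
    using y2 by (intro sum.cong) (auto simp: Q_def)
  also have "\<dots> = (\<Sum>j<n-s. A 0 j * q j) + (\<Sum>j<n-s. \<Sum>i<s. x i * A (Suc i) j * q j)"
    by (simp add: distrib_right sum.distrib sum_distrib_right)
  also have "(\<Sum>j<n-s. \<Sum>i<s. x i * A (Suc i) j * q j) = (\<Sum>i<s. \<Sum>j<n-s. x i * A (Suc i) j * q j)"
    by (rule sum.swap)
  finally have "dotp n y Q = (\<Sum>i<s. x i * p (Suc i)) + (\<Sum>j<n-s. A 0 j * q j)
      + (\<Sum>i<s. \<Sum>j<n-s. x i * A (Suc i) j * q j)" by simp
  moreover have "e 0 + (\<Sum>i<s. x i * e (Suc i)) = (\<Sum>j<n-s. A 0 j * q j) + p 0 +
      (\<Sum>i<s. \<Sum>j<n-s. x i * A (Suc i) j * q j) + (\<Sum>i<s. x i * p (Suc i))"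
    unfolding e_def matvec_def
    by (simp add: sum.distrib algebra_simps sum_distrib_left)
  ultimately show ?thesis by simp
qed


lemma key:
  fixes x :: "nat \<Rightarrow> real" and q p :: "nat \<Rightarrow> int"
  assumes sn: "s < n"
    and y1: "\<forall>i<s. y i = x i"
    and y2: "\<forall>j<n - s. y (s + j) = A 0 j + (\<Sum>i<s. x i * A (i + 1) j)"
    and Eb: "supnorm (s + 1) (\<lambda>i. matvec s n A q i + real_of_int (p i))
            < supnorm (n - s) (\<lambda>j. real_of_int (q j)) powr (- u)"
    and u: "0 < u"
    and NR: "R \<le> supnorm (n - s) (\<lambda>j. real_of_int (q j))" and R1: "1 \<le> R"
    and Rp: "\<forall>N\<ge>R. (1 + (\<Sum>i<s. \<bar>x i\<bar>)) * N powr (-u)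
               \<le> ((1 + (\<Sum>i<s. \<Sum>j<n-s. \<bar>A (Suc i) j\<bar>)) * N) powr (-v)
             \<and> (1 + (\<Sum>i<s. \<bar>x i\<bar>)) * N powr (-u) \<le> N powr (-v)"
  shows "\<bar>dotp n y (\<lambda>i. if i < s then p (Suc i) else if i < n then q (i - s) else 0)
            + real_of_int (p 0)\<bar>
         < supnorm n (\<lambda>i. real_of_int (if i < s then p (Suc i) else if i < n then q (i - s) else 0))
             powr (- v)"
proof -
  define Q where "Q \<equiv> (\<lambda>i. if i < s then p (Suc i) else if i < n then q (i - s) else 0)"
  define e where "e \<equiv> (\<lambda>i. matvec s n A q i + real_of_int (p i))"
  define N where "N = supnorm (n - s) (\<lambda>j. real_of_int (q j))"
  define E where "E = supnorm (s + 1) e"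
  define C where "C = 1 + (\<Sum>i<s. \<bar>x i\<bar>)"
  define K where "K = 1 + (\<Sum>i<s. \<Sum>j<n-s. \<bar>A (Suc i) j\<bar>)"
  define M where "M = supnorm n (\<lambda>i. real_of_int (Q i))"
  have C0: "C \<ge> 1" unfolding C_def by (simp add: sum_nonneg)
  have K1: "K \<ge> 1" unfolding K_def by (simp add: sum_nonneg)
  have N1: "N \<ge> 1" using NR R1 N_def by simp
  have EN: "E < N powr (-u)" using Eb unfolding E_def N_def e_def .
  have Nu: "N powr (-u) \<le> 1"
  proof -
    have "N powr (-u) \<le> N powr 0" using N1 u by (intro powr_mono) auto
    then show ?thesis using N1 by simp
  qed
  have E1: "E < 1" using EN Nu by simp
  have eb: "\<bar>e k\<bar> \<le> E" if "k < s + 1" for k using supnorm_ge[OF that] E_def by simp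
  have id: "dotp n y Q + real_of_int (p 0) = e 0 + (\<Sum>i<s. x i * e (Suc i))"
    unfolding Q_def e_def using identity[OF sn y1 y2] by simp
  have "\<bar>e 0 + (\<Sum>i<s. x i * e (Suc i))\<bar> \<le> \<bar>e 0\<bar> + (\<Sum>i<s. \<bar>x i\<bar> * \<bar>e (Suc i)\<bar>)"
  proof -
    have "\<bar>e 0 + (\<Sum>i<s. x i * e (Suc i))\<bar> \<le> \<bar>e 0\<bar> + \<bar>\<Sum>i<s. x i * e (Suc i)\<bar>"
      by (rule abs_triangle_ineq)
    also have "\<bar>\<Sum>i<s. x i * e (Suc i)\<bar> \<le> (\<Sum>i<s. \<bar>x i * e (Suc i)\<bar>)" by (rule sum_abs)
    finally show ?thesis by (simp add: abs_mult)
  qed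
  also have "\<dots> \<le> E + (\<Sum>i<s. \<bar>x i\<bar> * E)"
    using eb by (intro add_mono sum_mono mult_left_mono) auto
  also have "\<dots> = C * E" unfolding C_def by (simp add: sum_distrib_right distrib_right)
  also have "\<dots> < C * N powr (-u)" using C0 EN by simp
  finally have lhs: "\<bar>dotp n y Q + real_of_int (p 0)\<bar> < C * N powr (-u)" using id by simp
  have NM: "N \<le> M"
  proof -
    obtain i0 where i0: "i0 < n - s" "N = \<bar>real_of_int (q i0)\<bar>"
      using supnorm_att[of "n - s" "\<lambda>j. real_of_int (q j)"] sn N_def by auto
    have "\<bar>real_of_int (Q (s + i0))\<bar> \<le> M" unfolding M_def using i0 by (intro supnorm_ge) auto
    moreover have "Q (s + i0) = q i0" unfolding Q_def using i0 by auto
    ultimately show ?thesis using i0 by simp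
  qed
  have qb: "\<bar>real_of_int (q j)\<bar> \<le> N" if "j < n - s" for j
    unfolding N_def using supnorm_ge[OF that, of "\<lambda>j. real_of_int (q j)"] by simp
  have MK: "M \<le> K * N"
    unfolding M_def
  proof (rule supnorm_le)
    show "0 < n" using sn by simp
    fix i assume i: "i < n"
    show "\<bar>real_of_int (Q i)\<bar> \<le> K * N"
    proof (cases "i < s")
      case True
      have mv: "\<bar>matvec s n A q (Suc i)\<bar> \<le> (\<Sum>j<n-s. \<bar>A (Suc i) j\<bar>) * N"
      proof -
        have "\<bar>matvec s n A q (Suc i)\<bar> \<le> (\<Sum>j<n-s. \<bar>A (Suc i) j * real_of_int (q j)\<bar>)"
          unfolding matvec_def by (rule sum_abs)
        also have "\<dots> \<le> (\<Sum>j<n-s. \<bar>A (Suc i) j\<bar> * N)"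
          using qb by (intro sum_mono) (auto simp: abs_mult intro: mult_left_mono)
        finally show ?thesis by (simp add: sum_distrib_right)
      qed
      have "(\<Sum>j<n-s. \<bar>A (Suc i) j\<bar>) \<le> (\<Sum>i<s. \<Sum>j<n-s. \<bar>A (Suc i) j\<bar>)"
        using True by (intro member_le_sum) (auto intro: sum_nonneg)
      then have sK: "(\<Sum>j<n-s. \<bar>A (Suc i) j\<bar>) * N \<le> (\<Sum>i<s. \<Sum>j<n-s. \<bar>A (Suc i) j\<bar>) * N"
        using N1 by (intro mult_right_mono) auto
      have "real_of_int (Q i) = e (Suc i) - matvec s n A q (Suc i)"
        unfolding Q_def e_def using True by simp
      then have "\<bar>real_of_int (Q i)\<bar> \<le> \<bar>e (Suc i)\<bar> + \<bar>matvec s n A q (Suc i)\<bar>" by simp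
      also have "\<dots> \<le> 1 + (\<Sum>i<s. \<Sum>j<n-s. \<bar>A (Suc i) j\<bar>) * N"
        using eb[of "Suc i"] True E1 mv sK by simp
      also have "\<dots> \<le> K * N" unfolding K_def using N1 by (simp add: algebra_simps)
      finally show ?thesis .
    next
      case False
      then have "Q i = q (i - s)" unfolding Q_def using i by simp
      moreover have "\<bar>real_of_int (q (i - s))\<bar> \<le> N" using qb False i by simp
      moreover have "N \<le> K * N" using K1 N1 by simp
      ultimately show ?thesis by simp
    qed
  qed
  have Rp': "C * N powr (-u) \<le> (K * N) powr (-v)" "C * N powr (-u) \<le> N powr (-v)"
  proof -
    have NR': "R \<le> N" using NR N_def by simp
    show "C * N powr (-u) \<le> (K * N) powr (-v)" "C * N powr (-u) \<le> N powr (-v)"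
      using Rp[rule_format, OF NR'] unfolding C_def K_def by auto
  qed
  have "C * N powr (-u) \<le> M powr (-v)"
  proof (cases "v \<ge> 0")
    case True
    have "(K * N) powr (-v) \<le> M powr (-v)" using True NM N1 MK by (intro powr_mono2') auto
    then show ?thesis using Rp' by simp
  next
    case False
    have "N powr (-v) \<le> M powr (-v)" using False NM N1 by (intro powr_mono2) auto
    then show ?thesis using Rp' by simp
  qed
  then show ?thesis using lhs unfolding Q_def M_def by simp
qed


theorem lemma5p4:
  fixes s n :: nat and A :: "nat \<Rightarrow> nat \<Rightarrow> real" and v :: real
  assumes "s < n"
    and "ereal v < omega s n A"
  shows "\<exists>\<A> :: (int \<times> (nat \<Rightarrow> int)) set.
           infinite \<A> \<and> (\<forall>(p, q)\<in>\<A>. supp_in n q) \<and>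
           (\<forall>y\<in>Lspace s n A.
              finite {(p, q) \<in> \<A>. \<not> (\<bar>dotp n y q + real_of_int p\<bar>
                  < supnorm n (\<lambda>i. real_of_int (q i)) powr (- v))})"
proof -
  note sn = assms(1)
  obtain u where u: "u > 0" "v < u" and Sinf: "infinite {q :: nat \<Rightarrow> int. supp_in (n - s) q \<and>
       (\<exists>p :: nat \<Rightarrow> int. supp_in (s + 1) p \<and>
          supnorm (s + 1) (\<lambda>i. matvec s n A q i + real_of_int (p i))
            < supnorm (n - s) (\<lambda>j. real_of_int (q j)) powr (- u))}"
    using assms(2) unfolding omega_def less_Sup_iff by auto
  define S where "S = {q :: nat \<Rightarrow> int. supp_in (n - s) q \<and>
       (\<exists>p :: nat \<Rightarrow> int. supp_in (s + 1) p \<and>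
          supnorm (s + 1) (\<lambda>i. matvec s n A q i + real_of_int (p i))
            < supnorm (n - s) (\<lambda>j. real_of_int (q j)) powr (- u))}"
  define P where "P = (\<lambda>q. SOME p :: nat \<Rightarrow> int. supp_in (s + 1) p \<and>
          supnorm (s + 1) (\<lambda>i. matvec s n A q i + real_of_int (p i))
            < supnorm (n - s) (\<lambda>j. real_of_int (q j)) powr (- u))"
  have PS: "supnorm (s + 1) (\<lambda>i. matvec s n A q i + real_of_int (P q i))
            < supnorm (n - s) (\<lambda>j. real_of_int (q j)) powr (- u)"
    and qsupp: "supp_in (n - s) q" if "q \<in> S" for q
  proof -
    from that have "\<exists>p :: nat \<Rightarrow> int. supp_in (s + 1) p \<and>
          supnorm (s + 1) (\<lambda>i. matvec s n A q i + real_of_int (p i))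
            < supnorm (n - s) (\<lambda>j. real_of_int (q j)) powr (- u)" unfolding S_def by auto
    from someI_ex[OF this] show "supnorm (s + 1) (\<lambda>i. matvec s n A q i + real_of_int (P q i))
            < supnorm (n - s) (\<lambda>j. real_of_int (q j)) powr (- u)" unfolding P_def by blast
    show "supp_in (n - s) q" using that unfolding S_def by auto
  qed
  define F where "F = (\<lambda>q. (P q 0, \<lambda>i. if i < s then P q (Suc i) else if i < n then q (i - s) else 0))"
  have inj: "inj_on F S"
  proof (rule inj_onI)
    fix a b assume a: "a \<in> S" and b: "b \<in> S" and e: "F a = F b"
    have e2: "snd (F a) = snd (F b)" using e by simp
    show "a = b"
    proof
      fix j show "a j = b j"
      proof (cases "j < n - s")
        case True
        have "snd (F a) (s + j) = snd (F b) (s + j)" using e2 by simp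
        moreover have "s + j < n" using True by simp
        ultimately show ?thesis unfolding F_def by auto
      next
        case False then show ?thesis using qsupp[OF a] qsupp[OF b] by (auto simp: supp_in_def)
      qed
    qed
  qed
  show ?thesis
  proof (intro exI[of _ "F ` S"] conjI ballI)
    show "infinite (F ` S)" using Sinf inj S_def finite_image_iff by auto
    show "\<And>x. x \<in> F ` S \<Longrightarrow> case x of (p, q) \<Rightarrow> supp_in n q"
      using sn unfolding F_def by (auto simp: supp_in_def)
  next
    fix y assume "y \<in> Lspace s n A"
    then obtain x :: "nat \<Rightarrow> real" where y1: "\<forall>i<s. y i = x i"
      and y2: "\<forall>j<n - s. y (s + j) = A 0 j + (\<Sum>i<s. x i * A (i + 1) j)"
      unfolding Lspace_def by auto
    define C where "C = 1 + (\<Sum>i<s. \<bar>x i\<bar>)"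
    define K where "K = 1 + (\<Sum>i<s. \<Sum>j<n-s. \<bar>A (Suc i) j\<bar>)"
    have C0: "C > 0" unfolding C_def by (simp add: sum_nonneg add_pos_nonneg)
    have K0: "K > 0" unfolding K_def by (simp add: sum_nonneg add_pos_nonneg)
    obtain R where R1: "R \<ge> 1" and Rp: "\<forall>N\<ge>R. C * N powr (-u) \<le> (K*N) powr (-v) \<and> C * N powr (-u) \<le> N powr (-v)"
      using threshold[OF u(2) u(1) C0 K0] by blast
    let ?bad = "{(p, q) \<in> F ` S. \<not> (\<bar>dotp n y q + real_of_int p\<bar>
                  < supnorm n (\<lambda>i. real_of_int (q i)) powr (- v))}"
    have "?bad \<subseteq> F ` {q. supp_in (n - s) q \<and> (\<forall>i<n - s. \<bar>real_of_int (q i)\<bar> \<le> R)}"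
    proof
      fix z assume z: "z \<in> ?bad"
      then obtain q where q: "q \<in> S" "z = F q" by auto
      have "\<forall>i<n - s. \<bar>real_of_int (q i)\<bar> \<le> R"
      proof (rule ccontr)
        assume "\<not> (\<forall>i<n - s. \<bar>real_of_int (q i)\<bar> \<le> R)"
        then obtain i where i: "i < n - s" "\<bar>real_of_int (q i)\<bar> > R" by auto
        have NR: "R \<le> supnorm (n - s) (\<lambda>j. real_of_int (q j))"
          using supnorm_ge[OF i(1), of "\<lambda>j. real_of_int (q j)"] i by simp
        have "\<bar>dotp n y (\<lambda>i. if i < s then P q (Suc i) else if i < n then q (i - s) else 0)
            + real_of_int (P q 0)\<bar>
         < supnorm n (\<lambda>i. real_of_int (if i < s then P q (Suc i) else if i < n then q (i - s) else 0))
             powr (- v)"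
          by (rule key[OF sn y1 y2 PS[OF q(1)] u(1) NR R1 Rp[unfolded C_def K_def]])
        then show False using z q unfolding F_def by auto
      qed
      then show "z \<in> F ` {q. supp_in (n - s) q \<and> (\<forall>i<n - s. \<bar>real_of_int (q i)\<bar> \<le> R)}"
        using q qsupp by auto
    qed
    moreover have "finite (F ` {q. supp_in (n - s) q \<and> (\<forall>i<n - s. \<bar>real_of_int (q i)\<bar> \<le> R)})"
      by (intro finite_imageI fin_bounded)
    ultimately show "finite ?bad" by (rule finite_subset)
  qed
qed

end
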